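(* Let $X$ be a locally compact metrizable space that is not compact, and suppose that $\operatorname{Homeo}_{\overline U}(X)$ is not locally compact for every non-empty open set $U\subseteq X$ with $\overline U$ compact. Then the family $\{\operatorname{Homeo}_K(X)\}_{K\in\mathscr K(X)}$ does not satisfy ACP.
   Context: For a compact subset $K$ of a locally compact Hausdorff space $X$, $\operatorname{Homeo}_K(X)$ denotes the group of homeomorphisms $h$ of $X$ with $h(x)=x$ for all $x\in X\setminus K$, equipped with the compact-open topology (it is a topological group). $\mathscr K(X)$ is the set of compact subsets of $X$ ordered by inclusion, and the family has inclusions as bonding maps. For a directed family $\{G_\alpha\}$ of topological groups with inclusions that are closed embeddings as bonding maps and union $G$, the colimit space topology is $\mathscr T=\{U\subseteq G\mid U\cap G_\alpha\text{ open in }G_\alpha\ \forall\alpha\}$; the family satisfies ACP if $(G,\mathscr T)$ is a topological group (equivalently, $\mathscr T$ equals the finest group topology making all inclusions continuous). *)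

theory Defs
  imports "HOL-Analysis.Analysis"
begin

text \<open>Functions are
  normalised to be the identity outside the carrier of X, so each homeomorphism
  is represented by exactly one HOL function.\<close>
definition Homeo_on :: "'a topology \<Rightarrow> 'a set \<Rightarrow> ('a \<Rightarrow> 'a) set" where
  "Homeo_on X K = {h. homeomorphic_map X X h \<and> (\<forall>x \<in> topspace X - K. h x = x)
                       \<and> (\<forall>x. x \<notin> topspace X \<longrightarrow> h x = x)}"

text \<open>Compact-open topology on a set S of self-maps of X (subbasis: maps sending
  a compact C into an open U). With C = {} the subbasis covers S.\<close>
definition compact_open :: "'a topology \<Rightarrow> ('a \<Rightarrow> 'a) set \<Rightarrow> ('a \<Rightarrow> 'a) topology" where
  "compact_open X S = topology_generated_by
     {{f \<in> S. f ` C \<subseteq> U} | C U. compactin X C \<and> openin X U}"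

definition homeo_inv :: "'a topology \<Rightarrow> ('a \<Rightarrow> 'a) \<Rightarrow> ('a \<Rightarrow> 'a)" where
  "homeo_inv X h = (\<lambda>y. if y \<in> topspace X then inv_into (topspace X) h y else y)"

definition homeo_topological_group :: "'a topology \<Rightarrow> ('a \<Rightarrow> 'a) topology \<Rightarrow> bool" where
  "homeo_topological_group X T \<longleftrightarrow>
     continuous_map (prod_topology T T) T (\<lambda>(f, g). f \<circ> g) \<and>
     continuous_map T T (homeo_inv X)"

definition Homeo_c :: "'a topology \<Rightarrow> ('a \<Rightarrow> 'a) set" where
  "Homeo_c X = (\<Union>K \<in> {K. compactin X K}. Homeo_on X K)"

definition colimit_topology :: "'a topology \<Rightarrow> ('a \<Rightarrow> 'a) topology" where
  "colimit_topology X = topology (\<lambda>U. U \<subseteq> Homeo_c X \<and>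
     (\<forall>K. compactin X K \<longrightarrow> openin (compact_open X (Homeo_on X K)) (U \<inter> Homeo_on X K)))"

definition Homeo_ACP :: "'a topology \<Rightarrow> bool" where
  "Homeo_ACP X \<longleftrightarrow> homeo_topological_group X (colimit_topology X)"

end

theory Submission
  imports Defs
begin



definition dsup :: "'a set \<Rightarrow> ('a \<Rightarrow> 'a \<Rightarrow> real) \<Rightarrow> ('a \<Rightarrow> 'a) \<Rightarrow> ('a \<Rightarrow> 'a) \<Rightarrow> real" where
  "dsup M d f g = (if bdd_above ((\<lambda>x. d (f x) (g x)) ` M)
      then Sup (insert 0 ((\<lambda>x. d (f x) (g x)) ` M)) else 0)"

context Metric_space
begin

lemma homeo_on_props:
  assumes h: "h \<in> Homeo_on mtopology L" and L: "L \<subseteq> M"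
  shows "\<And>x. x \<in> M \<Longrightarrow> h x \<in> M" "h ` M = M" "inj_on h M" "\<And>x. x \<in> L \<Longrightarrow> h x \<in> L"
    "\<And>x. x \<notin> L \<Longrightarrow> h x = x" "homeomorphic_map mtopology mtopology h"
proof -
  have hm: "homeomorphic_map mtopology mtopology h" and fix1: "\<forall>x\<in>M - L. h x = x" and fix2: "\<forall>x. x \<notin> M \<longrightarrow> h x = x"
    using h by (auto simp: Homeo_on_def)
  show "homeomorphic_map mtopology mtopology h" by (fact hm)
  show sur: "h ` M = M" using homeomorphic_imp_surjective_map[OF hm] by simp
  show inj: "inj_on h M" using homeomorphic_imp_injective_map[OF hm] by simp
  show "\<And>x. x \<in> M \<Longrightarrow> h x \<in> M" using sur by blast
  show out: "\<And>x. x \<notin> L \<Longrightarrow> h x = x" using fix1 fix2 by blast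
  show "\<And>x. x \<in> L \<Longrightarrow> h x \<in> L"
  proof (rule ccontr)
    fix x assume x: "x \<in> L" "h x \<notin> L"
    then have "h (h x) = h x" using out by blast
    moreover have "h x \<in> M" using sur x L by blast
    ultimately have "h x = x" using inj x L by (meson inj_onD subsetD)
    then show False using x by simp
  qed
qed

definition "bddf f g \<longleftrightarrow> (\<exists>B. \<forall>x\<in>M. d (f x) (g x) \<le> B)"

lemma dsup_upper: "bddf f g \<Longrightarrow> x \<in> M \<Longrightarrow> d (f x) (g x) \<le> dsup M d f g"
  unfolding dsup_def bddf_def
  apply (subst if_P)
   apply (force simp: bdd_above_def)
  apply (rule cSup_upper)
   apply blast
  apply (auto simp: bdd_above_def)
  by (meson order_trans nonneg)

lemma dsup_le: "r \<ge> 0 \<Longrightarrow> (\<And>x. x \<in> M \<Longrightarrow> d (f x) (g x) \<le> r) \<Longrightarrow> dsup M d f g \<le> r"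
  unfolding dsup_def
  apply (subst if_P)
   apply (force simp: bdd_above_def)
  by (rule cSup_least) auto

lemma dsup_nonneg: "dsup M d f g \<ge> 0"
  unfolding dsup_def
  apply (cases "bdd_above ((\<lambda>x. d (f x) (g x)) ` M)")
   apply simp
   apply (rule cSup_upper)
  by auto

lemma dsup_commute: "dsup M d f g = dsup M d g f"
  unfolding dsup_def by (simp add: commute)

lemma bddf_homeo:
  assumes "f \<in> Homeo_on mtopology L" "g \<in> Homeo_on mtopology L" "compactin mtopology L"
  shows "bddf f g"
proof -
  have L: "L \<subseteq> M" using assms(3) compactin_subset_topspace by fastforce
  obtain B where B: "\<forall>x\<in>L. \<forall>y\<in>L. d x y \<le> B"
    using compactin_imp_mbounded[OF assms(3)] mbounded_alt by blast
  have "\<forall>x\<in>M. d (f x) (g x) \<le> max B 0"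
  proof
    fix x assume "x \<in> M"
    show "d (f x) (g x) \<le> max B 0"
    proof (cases "x \<in> L")
      case True
      then show ?thesis using B homeo_on_props(4)[OF assms(1) L] homeo_on_props(4)[OF assms(2) L]
        by (meson max.coboundedI1)
    next
      case False
      then show ?thesis using homeo_on_props(5)[OF assms(1) L] homeo_on_props(5)[OF assms(2) L] \<open>x \<in> M\<close> by simp
    qed
  qed
  then show ?thesis unfolding bddf_def by blast
qed

lemma Homeo_on_mono: "L \<subseteq> L' \<Longrightarrow> Homeo_on X L \<subseteq> Homeo_on X L'"
  unfolding Homeo_on_def by auto

lemma Metric_space_Homeo:
  assumes "compactin mtopology L"
  shows "Metric_space (Homeo_on mtopology L) (dsup M d)"
proof
  have L: "L \<subseteq> M" using assms compactin_subset_topspace by fastforce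
  show "0 \<le> dsup M d x y" for x y by (rule dsup_nonneg)
  show "dsup M d x y = dsup M d y x" for x y by (rule dsup_commute)
  show "(dsup M d x y = 0) = (x = y)" if xy: "x \<in> Homeo_on mtopology L" "y \<in> Homeo_on mtopology L" for x y
  proof
    assume 0: "dsup M d x y = 0"
    show "x = y"
    proof
      fix z show "x z = y z"
      proof (cases "z \<in> M")
        case True
        then have "d (x z) (y z) \<le> 0" using dsup_upper[OF bddf_homeo[OF xy assms]] 0 by metis
        then show ?thesis using True homeo_on_props(1)[OF xy(1) L] homeo_on_props(1)[OF xy(2) L]
          by (meson nonneg order_antisym zero)
      next
        case False
        then show ?thesis using xy L homeo_on_props(5) by (metis subsetD)
      qed
    qed
  next
    assume "x = y" then show "dsup M d x y = 0"
      by (metis dsup_le dsup_nonneg order_antisym order_refl homeo_on_props(1)[OF xy(1) L] zero)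
  qed
  show "dsup M d x z \<le> dsup M d x y + dsup M d y z"
    if xyz: "x \<in> Homeo_on mtopology L" "y \<in> Homeo_on mtopology L" "z \<in> Homeo_on mtopology L" for x y z
  proof (rule dsup_le)
    show "0 \<le> dsup M d x y + dsup M d y z" using dsup_nonneg by (simp add: add_nonneg_nonneg)
    fix w assume w: "w \<in> M"
    have "d (x w) (z w) \<le> d (x w) (y w) + d (y w) (z w)"
      using triangle homeo_on_props(1)[OF xyz(1) L] homeo_on_props(1)[OF xyz(2) L] homeo_on_props(1)[OF xyz(3) L] w by blast
    also have "\<dots> \<le> dsup M d x y + dsup M d y z"
      using dsup_upper[OF bddf_homeo[OF xyz(1,2) assms] w] dsup_upper[OF bddf_homeo[OF xyz(2,3) assms] w] by linarith
    finally show "d (x w) (z w) \<le> dsup M d x y + dsup M d y z" .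
  qed
qed

end


context Metric_space
begin

lemma co_subset_metric:
  assumes L: "compactin mtopology L"
    and S: "openin (compact_open mtopology (Homeo_on mtopology L)) S"
  shows "openin (Metric_space.mtopology (Homeo_on mtopology L) (dsup M d)) S"
proof -
  define G where "G = Homeo_on mtopology L"
  interpret G: Metric_space G "dsup M d" unfolding G_def by (rule Metric_space_Homeo[OF L])
  have LM: "L \<subseteq> M" using L compactin_subset_topspace by fastforce
  have gen: "generate_topology_on {{f \<in> G. f ` C \<subseteq> U} | C U. compactin mtopology C \<and> openin mtopology U} S"
    using S unfolding compact_open_def G_def by (simp add: openin_topology_generated_by_iff)
  show ?thesis
    unfolding G_def[symmetric]
  proof (rule generate_topology_on_coarsest[OF _ _ gen])
    show "istopology (openin G.mtopology)" by simp
    fix B assume "B \<in> {{f \<in> G. f ` C \<subseteq> U} | C U. compactin mtopology C \<and> openin mtopology U}"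
    then obtain C U where B: "B = {f \<in> G. f ` C \<subseteq> U}" and C: "compactin mtopology C" and U: "openin mtopology U"
      by blast
    show "openin G.mtopology B"
      unfolding G.openin_mtopology
    proof (intro conjI allI impI)
      show "B \<subseteq> G" using B by blast
      fix f assume fB: "f \<in> B"
      then have fG: "f \<in> G" and fCU: "f ` C \<subseteq> U" using B by auto
      have "compactin mtopology (f ` C)"
        using image_compactin[OF C] homeo_on_props(6)[OF fG[unfolded G_def] LM]
        by (meson homeomorphic_imp_continuous_map)
      then obtain e where e: "e > 0" "\<forall>x \<in> f ` C. \<exists>V\<in>{U}. mball x e \<subseteq> V"
        using lebesgue_number[of "f ` C" "{U}"] fCU U by auto
      show "\<exists>r>0. G.mball f r \<subseteq> B"
      proof (intro exI conjI)
        show "e > 0" by fact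
        show "G.mball f e \<subseteq> B"
        proof
          fix h assume h: "h \<in> G.mball f e"
          then have hG: "h \<in> G" and fh: "dsup M d f h < e" by auto
          have "h x \<in> U" if x: "x \<in> C" for x
          proof -
            have xM: "x \<in> M" using x C compactin_subset_topspace by fastforce
            have "d (f x) (h x) \<le> dsup M d f h"
              using dsup_upper[OF bddf_homeo[OF fG[unfolded G_def] hG[unfolded G_def] L] xM] .
            moreover have "h x \<in> M" "f x \<in> M" using homeo_on_props(1) hG fG LM xM unfolding G_def by blast+
            ultimately have "h x \<in> mball (f x) e" using fh by auto
            then show ?thesis using e(2) x by blast
          qed
          then show "h \<in> B" using B hG by blast
        qed
      qed
    qed
  qed
qed

end


context Metric_space
begin

lemma co_nbhd:
  assumes L: "compactin mtopology L" and gG: "g \<in> Homeo_on mtopology L" and e: "e > 0"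
  shows "\<exists>N. openin (compact_open mtopology (Homeo_on mtopology L)) N \<and> g \<in> N \<and>
             (\<forall>f\<in>N. f \<in> Homeo_on mtopology L \<and> dsup M d g f < e)"
proof -
  define G where "G = Homeo_on mtopology L"
  define \<B> where "\<B> = {{f \<in> G. f ` C \<subseteq> U} | C U. compactin mtopology C \<and> openin mtopology U}"
  have LM: "L \<subseteq> M" using L compactin_subset_topspace by fastforce
  have gc: "continuous_map mtopology mtopology g"
    using homeo_on_props(6)[OF gG LM] homeomorphic_imp_continuous_map by blast
  have "\<forall>x\<in>M. \<exists>\<delta>>0. \<forall>y. y \<in> M \<and> d x y < \<delta> \<longrightarrow> d (g x) (g y) < e/3"
    using gc metric_continuous_map[OF Metric_space_axioms] e by (metis divide_pos_pos zero_less_numeral)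
  then obtain \<delta> where \<delta>: "\<And>x. x \<in> M \<Longrightarrow> \<delta> x > 0" "\<And>x y. x \<in> M \<Longrightarrow> y \<in> M \<Longrightarrow> d x y < \<delta> x \<Longrightarrow> d (g x) (g y) < e/3"
    by metis
  have "L \<subseteq> \<Union> ((\<lambda>x. mball x (\<delta> x / 2)) ` L)"
  proof
    fix x assume x: "x \<in> L"
    then have "x \<in> M" using LM by blast
    then have "x \<in> mball x (\<delta> x / 2)" using \<delta>(1) by simp
    then show "x \<in> \<Union> ((\<lambda>x. mball x (\<delta> x / 2)) ` L)" using x by blast
  qed
  then obtain F0 where F0: "finite F0" "F0 \<subseteq> (\<lambda>x. mball x (\<delta> x / 2)) ` L" "L \<subseteq> \<Union> F0"
    using L unfolding compactin_def by (metis (no_types, lifting) image_iff openin_mball)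
  then obtain F where F: "F \<subseteq> L" "finite F" "F0 = (\<lambda>x. mball x (\<delta> x / 2)) ` F"
    by (meson finite_subset_image)
  define B where "B x = {f \<in> G. f ` (L \<inter> mcball x (\<delta> x / 2)) \<subseteq> mball (g x) (e/3)}" for x
  define N where "N = \<Inter> (insert G (B ` F))"
  have gen: "generate_topology_on \<B> N"
    unfolding N_def
  proof (rule generate_topology_on_Inter)
    show "finite (insert G (B ` F))" using F by simp
    show "insert G (B ` F) \<noteq> {}" by simp
    fix K assume "K \<in> insert G (B ` F)"
    then have "K \<in> \<B>"
    proof
      assume "K = G"
      then have "K = {f \<in> G. f ` {} \<subseteq> M}" by simp
      then show "K \<in> \<B>" unfolding \<B>_def by blast
    next
      assume "K \<in> B ` F"
      then obtain x where x: "x \<in> F" "K = B x" by blast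
      have "compactin mtopology (L \<inter> mcball x (\<delta> x / 2))"
        by (metis L closed_Int_compactin closedin_mcball inf_commute)
      then show "K \<in> \<B>" unfolding \<B>_def x B_def by blast
    qed
    then show "generate_topology_on \<B> K" by (rule generate_topology_on.Basis)
  qed
  show ?thesis
  proof (intro exI conjI ballI)
    show "openin (compact_open mtopology (Homeo_on mtopology L)) N"
      using gen unfolding compact_open_def \<B>_def G_def by (simp add: openin_topology_generated_by_iff)
    have "g \<in> B x" if x: "x \<in> F" for x
    proof -
      have xM: "x \<in> M" using x F LM by blast
      have "g y \<in> mball (g x) (e / 3)" if y: "y \<in> L" "y \<in> mcball x (\<delta> x / 2)" for y
      proof -
        have "d x y < \<delta> x" using y \<delta>(1)[OF xM] by auto
        then have "d (g x) (g y) < e/3" using \<delta>(2) xM y LM by auto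
        moreover have "g x \<in> M" "g y \<in> M" using homeo_on_props(1)[OF gG LM] xM y LM by auto
        ultimately show "g y \<in> mball (g x) (e / 3)" by simp
      qed
      then show ?thesis unfolding B_def G_def using gG by blast
    qed
    then show "g \<in> N" unfolding N_def G_def using gG by blast
    fix f assume fN: "f \<in> N"
    then show fG: "f \<in> Homeo_on mtopology L" unfolding N_def G_def by blast
    have "dsup M d g f \<le> 2*e/3"
    proof (rule dsup_le)
      show "0 \<le> 2*e/3" using e by simp
      fix y assume yM: "y \<in> M"
      show "d (g y) (f y) \<le> 2 * e / 3"
      proof (cases "y \<in> L")
        case False
        then show ?thesis using homeo_on_props(5)[OF gG LM] homeo_on_props(5)[OF fG LM] yM e by simp
      next
        case True
        then obtain x where x: "x \<in> F" "y \<in> mball x (\<delta> x / 2)" using F F0 by blast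
        have xM: "x \<in> M" using x F LM by blast
        have "y \<in> L \<inter> mcball x (\<delta> x / 2)" using x True by auto
        moreover have "f \<in> B x" using fN x unfolding N_def by blast
        ultimately have "f y \<in> mball (g x) (e/3)" unfolding B_def by blast
        moreover have "d x y < \<delta> x" using x \<delta>(1)[OF xM] by auto
        then have "d (g x) (g y) < e/3" using \<delta>(2) xM yM by auto
        moreover have "g x \<in> M" "g y \<in> M" "f y \<in> M" using homeo_on_props(1)[OF gG LM] homeo_on_props(1)[OF fG LM] xM yM by auto
        ultimately show ?thesis using triangle[of "g y" "g x" "f y"] commute[of "g y" "g x"] by auto
      qed
    qed
    then show "dsup M d g f < e" using e by simp
  qed
qed

lemma metric_subset_co:
  assumes L: "compactin mtopology L"
    and S: "openin (Metric_space.mtopology (Homeo_on mtopology L) (dsup M d)) S"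
  shows "openin (compact_open mtopology (Homeo_on mtopology L)) S"
proof -
  define G where "G = Homeo_on mtopology L"
  interpret G: Metric_space G "dsup M d" unfolding G_def by (rule Metric_space_Homeo[OF L])
  show ?thesis
  proof (subst openin_subopen, intro ballI)
    fix g assume g: "g \<in> S"
    have S': "openin G.mtopology S" using S G_def by simp
    obtain e where e: "e > 0" "G.mball g e \<subseteq> S" using S' g unfolding G.openin_mtopology by blast
    have gG: "g \<in> G" using S' g G.openin_mtopology by blast
    obtain N where N: "openin (compact_open mtopology G) N" "g \<in> N" "\<forall>f\<in>N. f \<in> G \<and> dsup M d g f < e"
      using co_nbhd[OF L gG[unfolded G_def] e(1)] G_def by blast
    have "N \<subseteq> S" using N(3) e(2) gG by auto
    then show "\<exists>T. openin (compact_open mtopology (Homeo_on mtopology L)) T \<and> g \<in> T \<and> T \<subseteq> S"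
      using N G_def by blast
  qed
qed

end


lemma Homeo_on_id: "id \<in> Homeo_on X L"
  unfolding Homeo_on_def by simp

lemma Homeo_on_comp: "f \<in> Homeo_on X L \<Longrightarrow> g \<in> Homeo_on X L \<Longrightarrow> f \<circ> g \<in> Homeo_on X L"
  unfolding Homeo_on_def by (auto intro: homeomorphic_map_compose)

lemma Homeo_on_inv:
  assumes p: "p \<in> Homeo_on X L"
  shows "homeo_inv X p \<in> Homeo_on X L" "p \<circ> homeo_inv X p = id" "homeo_inv X p \<circ> p = id"
proof -
  have hm: "homeomorphic_map X X p" and fix1: "\<forall>x\<in>topspace X - L. p x = x" and fix2: "\<forall>x. x \<notin> topspace X \<longrightarrow> p x = x"
    using p by (auto simp: Homeo_on_def)
  obtain g where g: "homeomorphic_maps X X p g" using hm homeomorphic_map_maps by blast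
  then have g1: "homeomorphic_map X X g" "\<forall>x \<in> topspace X. g (p x) = x" "\<forall>y \<in> topspace X. p (g y) = y"
    by (auto simp: homeomorphic_maps_map)
  have inj: "inj_on p (topspace X)" using hm homeomorphic_imp_injective_map by blast
  have sur: "p ` topspace X = topspace X" using hm homeomorphic_imp_surjective_map by blast
  have gM: "g y \<in> topspace X" if "y \<in> topspace X" for y
    using g that unfolding homeomorphic_maps_def continuous_map_def by blast
  have eq: "homeo_inv X p y = g y" if y: "y \<in> topspace X" for y
    unfolding homeo_inv_def using y inv_into_f_eq[OF inj gM[OF y]] g1(3) by simp
  show "homeo_inv X p \<in> Homeo_on X L"
    unfolding Homeo_on_def
  proof (intro CollectI conjI ballI allI impI)
    show "homeomorphic_map X X (homeo_inv X p)" using homeomorphic_map_eq[OF g1(1)] eq by metis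
    fix x assume "x \<in> topspace X - L"
    then show "homeo_inv X p x = x" unfolding homeo_inv_def using fix1 inv_into_f_eq[OF inj] by auto
  next
    fix x assume "x \<notin> topspace X" then show "homeo_inv X p x = x" unfolding homeo_inv_def by simp
  qed
  show "p \<circ> homeo_inv X p = id"
  proof
    fix y show "(p \<circ> homeo_inv X p) y = id y"
      using eq g1(3) fix2 by (cases "y \<in> topspace X") (auto simp: homeo_inv_def)
  qed
  show "homeo_inv X p \<circ> p = id"
  proof
    fix x show "(homeo_inv X p \<circ> p) x = id x"
    proof (cases "x \<in> topspace X")
      case True
      then have "p x \<in> topspace X" using sur by blast
      then show ?thesis using True by (simp add: eq g1(2))
    next
      case False then show ?thesis by (simp add: homeo_inv_def fix2)
    qed
  qed
qed

context Metric_space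
begin

lemma dsup_right:
  assumes b: "b ` M = M" "\<And>x. x \<in> M \<Longrightarrow> b x \<in> M"
  shows "dsup M d (f \<circ> b) (g \<circ> b) = dsup M d f g"
proof -
  have "(\<lambda>x. d ((f \<circ> b) x) ((g \<circ> b) x)) ` M = (\<lambda>x. d (f x) (g x)) ` (b ` M)"
    by auto
  then show ?thesis unfolding dsup_def using b by simp
qed

end

context Metric_space
begin

lemma co_eq:
  assumes L: "compactin mtopology L"
  shows "compact_open mtopology (Homeo_on mtopology L) = Metric_space.mtopology (Homeo_on mtopology L) (dsup M d)"
  by (rule topology_eq[THEN iffD2]) (metis co_subset_metric metric_subset_co L)

end





context Metric_space
begin

lemma nonlc_seq:
  assumes C: "compactin mtopology C"
    and nlc: "\<not> locally_compact_space (compact_open mtopology (Homeo_on mtopology C))"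
    and r: "r > 0"
  shows "\<exists>s::nat \<Rightarrow> ('a \<Rightarrow> 'a). inj s \<and> (\<forall>j. s j \<in> Homeo_on mtopology C \<and> s j \<noteq> id \<and> dsup M d (s j) id < r)
          \<and> (\<forall>h\<in>Homeo_on mtopology C. \<exists>\<epsilon>>0. finite {j. dsup M d (s j) h < \<epsilon>})"
proof -
  define H where "H = Homeo_on mtopology C"
  interpret H: Metric_space H "dsup M d" unfolding H_def by (rule Metric_space_Homeo[OF C])
  have CM: "C \<subseteq> M" using C compactin_subset_topspace by fastforce
  have top: "compact_open mtopology H = H.mtopology" unfolding H_def by (rule co_eq[OF C])
  have idH: "id \<in> H" unfolding H_def by (rule Homeo_on_id)
  obtain p where pH: "p \<in> H" and np: "\<not> (\<exists>U K. openin H.mtopology U \<and> compactin H.mtopology K \<and> p \<in> U \<and> U \<subseteq> K)"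
  proof -
    have "\<not> locally_compact_space H.mtopology" using nlc top H_def by simp
    then show ?thesis using that unfolding locally_compact_space_def by auto
  qed
  have ncpt: "\<not> compactin H.mtopology (H.mcball id (r/2))"
  proof
    assume cpt: "compactin H.mtopology (H.mcball id (r/2))"
    define \<tau> where "\<tau> h = h \<circ> p" for h :: "'a \<Rightarrow> 'a"
    have pM: "p ` M = M" "\<And>x. x \<in> M \<Longrightarrow> p x \<in> M" using homeo_on_props[OF pH[unfolded H_def] CM] by auto
    have cont: "continuous_map H.mtopology H.mtopology \<tau>"
      unfolding H.metric_continuous_map[OF H.Metric_space_axioms]
    proof (intro conjI ballI allI impI)
      show "\<tau> ` H \<subseteq> H" unfolding \<tau>_def H_def using Homeo_on_comp pH H_def by blast
      fix a :: "'a \<Rightarrow> 'a" and \<epsilon> :: real assume "a \<in> H" "\<epsilon> > 0"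
      then show "\<exists>\<delta>>0. \<forall>x. x \<in> H \<and> dsup M d a x < \<delta> \<longrightarrow> dsup M d (\<tau> a) (\<tau> x) < \<epsilon>"
      proof (intro exI conjI allI impI)
        show "\<epsilon> > 0" by fact
        fix x assume "x \<in> H \<and> dsup M d a x < \<epsilon>"
        then show "dsup M d (\<tau> a) (\<tau> x) < \<epsilon>" unfolding \<tau>_def using dsup_right[OF pM, of a x] by simp
      qed
    qed
    have K: "compactin H.mtopology (\<tau> ` H.mcball id (r/2))" by (rule image_compactin[OF cpt cont])
    have "H.mball p (r/2) \<subseteq> \<tau> ` H.mcball id (r/2)"
    proof
      fix h assume h: "h \<in> H.mball p (r/2)"
      define q where "q = h \<circ> homeo_inv mtopology p"
      have pinv: "homeo_inv mtopology p \<in> H" "p \<circ> homeo_inv mtopology p = id" "homeo_inv mtopology p \<circ> p = id"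
        using Homeo_on_inv[OF pH[unfolded H_def]] H_def by auto
      have "h \<in> H" using h by simp
      then have qH: "q \<in> H" unfolding q_def using Homeo_on_comp pinv(1) H_def by auto
      have piM: "homeo_inv mtopology p ` M = M" "\<And>x. x \<in> M \<Longrightarrow> homeo_inv mtopology p x \<in> M"
        using homeo_on_props[OF pinv(1)[unfolded H_def] CM] by auto
      have "dsup M d id q = dsup M d (p \<circ> homeo_inv mtopology p) (h \<circ> homeo_inv mtopology p)"
        unfolding q_def pinv(2) ..
      also have "\<dots> = dsup M d p h" by (rule dsup_right[OF piM])
      finally have "dsup M d id q < r/2" using h by simp
      then have "q \<in> H.mcball id (r/2)" using qH idH by simp
      moreover have "\<tau> q = h" unfolding \<tau>_def q_def comp_assoc pinv(3) by simp
      ultimately show "h \<in> \<tau> ` H.mcball id (r/2)" by blast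
    qed
    moreover have "p \<in> H.mball p (r/2)" using pH r by simp
    ultimately have "openin H.mtopology (H.mball p (r/2)) \<and> compactin H.mtopology (\<tau> ` H.mcball id (r/2)) \<and> p \<in> H.mball p (r/2) \<and> H.mball p (r/2) \<subseteq> \<tau> ` H.mcball id (r/2)"
      using K r by simp
    then show False using np by blast
  qed
  obtain T where T: "T \<subseteq> H.mcball id (r/2)" "infinite T" "H.mcball id (r/2) \<inter> H.mtopology derived_set_of T = {}"
  proof -
    have "H.mcball id (r/2) \<subseteq> H" by (rule H.mcball_subset_mspace)
    then show ?thesis using ncpt that unfolding H.compactin_eq_Bolzano_Weierstrass by blast
  qed
  have der: "H.mtopology derived_set_of T = {}"
  proof -
    have "H.mtopology derived_set_of T \<subseteq> H.mtopology closure_of (H.mcball id (r/2))"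
      by (meson T(1) closure_of_mono derived_set_of_subset_closure_of order_trans)
    also have "\<dots> = H.mcball id (r/2)" by (simp add: closure_of_closedin)
    finally show ?thesis using T(3) by blast
  qed
  have "infinite (T - {id})" using T(2) by simp
  then obtain s :: "nat \<Rightarrow> ('a \<Rightarrow> 'a)" where s: "inj s" "range s \<subseteq> T - {id}"
    using infinite_countable_subset by blast
  have P1: "\<forall>j. s j \<in> Homeo_on mtopology C \<and> s j \<noteq> id \<and> dsup M d (s j) id < r"
  proof
    fix j
    have "s j \<in> range s" by simp
    then have sj: "s j \<in> H.mcball id (r/2)" "s j \<noteq> id" using s(2) T(1) by blast+
    then have "dsup M d id (s j) \<le> r/2" by simp
    then have "dsup M d (s j) id < r" using r H.commute[of id "s j"] by linarith
    moreover have "s j \<in> H" using sj(1) H.mcball_subset_mspace by blast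
    ultimately show "s j \<in> Homeo_on mtopology C \<and> s j \<noteq> id \<and> dsup M d (s j) id < r" using sj(2) H_def by simp
  qed
  have P2: "\<exists>\<epsilon>>0. finite {j. dsup M d (s j) h < \<epsilon>}" if hH: "h \<in> Homeo_on mtopology C" for h
  proof -
    have "h \<notin> H.mtopology derived_set_of T" using der by blast
    then obtain \<epsilon> where \<epsilon>: "\<epsilon> > 0" "\<forall>y\<in>T. y \<noteq> h \<longrightarrow> y \<notin> H.mball h \<epsilon>"
      using hH H_def unfolding H.metric_derived_set_of by auto
    have "{j. dsup M d (s j) h < \<epsilon>} \<subseteq> s -` {h}"
    proof
      fix j assume j: "j \<in> {j. dsup M d (s j) h < \<epsilon>}"
      have "s j \<in> range s" by simp
      then have "s j \<in> T" "s j \<in> H" using s(2) T(1) H.mcball_subset_mspace by blast+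
      moreover have "dsup M d h (s j) < \<epsilon>" using j H.commute[of h "s j"] by simp
      moreover have hH': "h \<in> H" using hH H_def by simp
      ultimately have "s j = h" using \<epsilon>(2) H.in_mball by blast
      then show "j \<in> s -` {h}" by simp
    qed
    moreover have "finite (s -` {h})" using s(1) by (simp add: finite_vimageI)
    ultimately show ?thesis using \<epsilon>(1) finite_subset by blast
  qed
  show ?thesis using s(1) P1 P2 by blast
qed

end


context Metric_space
begin

lemma lc_cpt_nbhd:
  assumes lc: "locally_compact_space mtopology" and K: "compactin mtopology K"
  shows "\<exists>V L. openin mtopology V \<and> compactin mtopology L \<and> K \<subseteq> V \<and> V \<subseteq> L"
  using lc K locally_compact_space_compact_closed_compact[of mtopology] Hausdorff_space_mtopology by blast

lemma open_seq:
  assumes lc: "locally_compact_space mtopology" and nc: "\<not> compact_space mtopology"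
  shows "\<exists>U::nat \<Rightarrow> 'a set. (\<forall>k. openin mtopology (U k) \<and> U k \<noteq> {} \<and> compactin mtopology (mtopology closure_of U k))
     \<and> (\<forall>k. k \<noteq> 0 \<longrightarrow> (mtopology closure_of U 0) \<inter> (mtopology closure_of U k) = {})
     \<and> (\<forall>L. compactin mtopology L \<longrightarrow> finite {k. (mtopology closure_of U k) \<inter> L \<noteq> {}})"
proof -
  obtain A where A: "A \<subseteq> M" "infinite A" "mtopology derived_set_of A = {}"
    using nc unfolding compact_space_eq_Bolzano_Weierstrass by blast
  obtain a :: "nat \<Rightarrow> 'a" where a: "inj a" "range a \<subseteq> A"
    using infinite_countable_subset[OF A(2)] by blast
  have aM: "a k \<in> M" for k using a A by blast
  have "\<exists>\<rho>>0. \<forall>y\<in>A. y \<noteq> a k \<longrightarrow> y \<notin> mball (a k) \<rho>" for k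
    using A(3) aM[of k] unfolding metric_derived_set_of by blast
  then obtain \<rho> where \<rho>: "\<And>k. \<rho> k > 0" "\<And>k y. y \<in> A \<Longrightarrow> y \<noteq> a k \<Longrightarrow> y \<notin> mball (a k) (\<rho> k)"
    by metis
  have "\<exists>s>0. compactin mtopology (mcball (a k) s)" for k
  proof -
    obtain V L where VL: "openin mtopology V" "compactin mtopology L" "{a k} \<subseteq> V" "V \<subseteq> L"
      using lc_cpt_nbhd[OF lc, of "{a k}"] aM by auto
    then obtain s where s: "s > 0" "mball (a k) s \<subseteq> V" unfolding openin_mtopology by blast
    have "mcball (a k) (s/2) \<subseteq> L" using s VL mcball_subset_mball_concentric[of "s/2" s] by fastforce
    then have "compactin mtopology (mcball (a k) (s/2))"
      using closed_compactin[OF VL(2)] closedin_mcball by blast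
    then show ?thesis using s by (intro exI[of _ "s/2"]) simp
  qed
  then obtain s where s: "\<And>k. s k > 0" "\<And>k. compactin mtopology (mcball (a k) (s k))" by metis
  define r where "r k = min (\<rho> k / 3) (min (s k) (1 / (real k + 1)))" for k
  have r: "r k > 0" "r k \<le> \<rho> k / 3" "r k \<le> s k" "r k \<le> 1 / (real k + 1)" for k
    unfolding r_def using \<rho>(1)[of k] s(1)[of k] by auto
  define U where "U k = mball (a k) (r k)" for k
  have clU: "mtopology closure_of U k \<subseteq> mcball (a k) (r k)" for k
    unfolding U_def by (rule closure_of_minimal[OF mball_subset_mcball closedin_mcball])
  have P1: "openin mtopology (U k) \<and> U k \<noteq> {} \<and> compactin mtopology (mtopology closure_of U k)" for k
  proof (intro conjI)
    show "openin mtopology (U k)" unfolding U_def by simp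
    have "a k \<in> U k" unfolding U_def using aM[of k] r(1)[of k] by simp
    then show "U k \<noteq> {}" by blast
    have "mcball (a k) (r k) \<subseteq> mcball (a k) (s k)" by (rule mcball_subset_concentric[OF r(3)])
    then have "mtopology closure_of U k \<subseteq> mcball (a k) (s k)" using clU[of k] by (rule subset_trans[rotated])
    then show "compactin mtopology (mtopology closure_of U k)"
      by (rule closed_compactin[OF s(2)[of k]]) simp
  qed
  have P2: "(mtopology closure_of U 0) \<inter> (mtopology closure_of U k) = {}" if k: "k \<noteq> 0" for k
  proof (rule ccontr)
    assume "(mtopology closure_of U 0) \<inter> (mtopology closure_of U k) \<noteq> {}"
    then obtain x where x: "x \<in> mcball (a 0) (r 0)" "x \<in> mcball (a k) (r k)" using clU by blast
    have ne: "a k \<noteq> a 0" using a(1) k by (meson injD)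
    have xM: "x \<in> M" and x0: "d (a 0) x \<le> r 0" and xk: "d (a k) x \<le> r k" using x by auto
    have "d (a 0) (a k) \<le> d (a 0) x + d x (a k)" by (rule triangle) (use aM xM in auto)
    also have "\<dots> \<le> r 0 + r k" using x0 xk commute[of x "a k"] by linarith
    finally have le: "d (a 0) (a k) \<le> \<rho> 0 / 3 + \<rho> k / 3" using r(2)[of 0] r(2)[of k] by linarith
    have akA: "a k \<in> A" "a 0 \<in> A" using a(2) by auto
    have "a k \<notin> mball (a 0) (\<rho> 0)" by (rule \<rho>(2)[OF akA(1) ne])
    then have g1: "d (a 0) (a k) \<ge> \<rho> 0" using aM[of 0] aM[of k] by (simp add: not_less)
    have "a 0 \<notin> mball (a k) (\<rho> k)" by (rule \<rho>(2)[OF akA(2) ne[symmetric]])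
    then have "d (a k) (a 0) \<ge> \<rho> k" using aM[of 0] aM[of k] by (simp add: not_less)
    then have g2: "d (a 0) (a k) \<ge> \<rho> k" using commute[of "a k" "a 0"] by linarith
    show False using le g1 g2 \<rho>(1)[of 0] \<rho>(1)[of k] by linarith
  qed
  have P3: "finite {k. (mtopology closure_of U k) \<inter> L \<noteq> {}}" if L: "compactin mtopology L" for L
  proof -
    obtain V K where VK: "openin mtopology V" "compactin mtopology K" "L \<subseteq> V" "V \<subseteq> K"
      using lc_cpt_nbhd[OF lc L] by blast
    obtain \<delta> where \<delta>: "\<delta> > 0" "\<forall>x\<in>L. \<exists>W\<in>{V}. mball x \<delta> \<subseteq> W"
      using lebesgue_number[OF L, of "{V}"] VK by auto
    have sub: "{k. (mtopology closure_of U k) \<inter> L \<noteq> {}} \<subseteq> {k. \<delta> \<le> 1 / (real k + 1)} \<union> a -` (A \<inter> K)"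
    proof
      fix k assume "k \<in> {k. (mtopology closure_of U k) \<inter> L \<noteq> {}}"
      then obtain x where x: "x \<in> mcball (a k) (r k)" "x \<in> L" using clU by blast
      show "k \<in> {k. \<delta> \<le> 1 / (real k + 1)} \<union> a -` (A \<inter> K)"
      proof (cases "\<delta> \<le> 1 / (real k + 1)")
        case False
        then have "d x (a k) < \<delta>" using x r(4)[of k] commute by auto
        then have "a k \<in> mball x \<delta>" using x aM by auto
        then have "a k \<in> K" using \<delta>(2) x VK by blast
        then show ?thesis using a by blast
      qed simp
    qed
    have f1: "finite {k. \<delta> \<le> 1 / (real k + 1)}"
    proof -
      have "{k. \<delta> \<le> 1 / (real k + 1)} \<subseteq> {..nat \<lceil>1/\<delta>\<rceil>}"
      proof
        fix k assume "k \<in> {k. \<delta> \<le> 1 / (real k + 1)}"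
        then have "\<delta> * (real k + 1) \<le> 1" using \<delta>(1) by (simp add: field_simps)
        then have "real k + 1 \<le> 1/\<delta>" using \<delta>(1) by (simp add: field_simps)
        then have "real k \<le> \<lceil>1/\<delta>\<rceil>" by linarith
        then show "k \<in> {..nat \<lceil>1/\<delta>\<rceil>}" by simp
      qed
      then show ?thesis using finite_subset by blast
    qed
    have "finite (A \<inter> K)"
    proof (rule ccontr)
      assume "infinite (A \<inter> K)"
      then have "K \<inter> mtopology derived_set_of (A \<inter> K) \<noteq> {}"
        using compactin_imp_Bolzano_Weierstrass[OF VK(2)] by blast
      moreover have "mtopology derived_set_of (A \<inter> K) = {}"
        using derived_set_of_mono[of "A \<inter> K" A mtopology] A(3) by blast
      ultimately show False by blast
    qed
    then have f2: "finite (a -` (A \<inter> K))" using finite_vimageI[of "A \<inter> K" a] a(1) by simp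
    show ?thesis using sub f1 f2 finite_subset by blast
  qed
  show ?thesis using P1 P2 P3 by blast
qed

end




lemma topspace_co: "topspace (compact_open X S) = S"
proof -
  have "S \<in> {{f \<in> S. f ` C \<subseteq> U} | C U. compactin X C \<and> openin X U}"
    by (rule CollectI, rule exI[of _ "{}"], rule exI[of _ "topspace X"]) auto
  then show ?thesis unfolding compact_open_def topology_generated_by_topspace by blast
qed

lemma colimit_open:
  "openin (colimit_topology X) W \<longleftrightarrow> W \<subseteq> Homeo_c X \<and>
     (\<forall>K. compactin X K \<longrightarrow> openin (compact_open X (Homeo_on X K)) (W \<inter> Homeo_on X K))"
proof -
  define P where "P = (\<lambda>U. U \<subseteq> Homeo_c X \<and>
     (\<forall>K. compactin X K \<longrightarrow> openin (compact_open X (Homeo_on X K)) (U \<inter> Homeo_on X K)))"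
  have "istopology P"
    unfolding istopology_def
  proof (intro conjI allI impI)
    fix S T assume "P S" "P T"
    then have S: "S \<subseteq> Homeo_c X" "\<And>K. compactin X K \<Longrightarrow> openin (compact_open X (Homeo_on X K)) (S \<inter> Homeo_on X K)"
      and T: "\<And>K. compactin X K \<Longrightarrow> openin (compact_open X (Homeo_on X K)) (T \<inter> Homeo_on X K)"
      unfolding P_def by auto
    have "openin (compact_open X (Homeo_on X K)) ((S \<inter> T) \<inter> Homeo_on X K)" if "compactin X K" for K
    proof -
      have "(S \<inter> T) \<inter> Homeo_on X K = (S \<inter> Homeo_on X K) \<inter> (T \<inter> Homeo_on X K)" by blast
      then show ?thesis using openin_Int[OF S(2)[OF that] T[OF that]] by simp
    qed
    then show "P (S \<inter> T)" unfolding P_def using S(1) by blast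
  next
    fix \<K> assume K: "\<forall>K\<in>\<K>. P K"
    then have K1: "\<And>U. U \<in> \<K> \<Longrightarrow> U \<subseteq> Homeo_c X"
      and K2: "\<And>U K. U \<in> \<K> \<Longrightarrow> compactin X K \<Longrightarrow> openin (compact_open X (Homeo_on X K)) (U \<inter> Homeo_on X K)"
      unfolding P_def by auto
    have "openin (compact_open X (Homeo_on X K)) (\<Union>\<K> \<inter> Homeo_on X K)" if "compactin X K" for K
    proof -
      have "openin (compact_open X (Homeo_on X K)) (\<Union>((\<lambda>U. U \<inter> Homeo_on X K) ` \<K>))"
        using K2[OF _ that] by (intro openin_Union) blast
      moreover have "\<Union>((\<lambda>U. U \<inter> Homeo_on X K) ` \<K>) = \<Union>\<K> \<inter> Homeo_on X K" by blast
      ultimately show ?thesis by simp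
    qed
    moreover have "\<Union>\<K> \<subseteq> Homeo_c X" using K1 by blast
    ultimately show "P (\<Union>\<K>)" unfolding P_def by blast
  qed
  then show ?thesis unfolding colimit_topology_def P_def[symmetric] by (simp add: P_def)
qed

lemma acp_mult:
  assumes acp: "Homeo_ACP X" and W: "openin (colimit_topology X) W" and idW: "id \<in> W"
  shows "\<exists>V. openin (colimit_topology X) V \<and> id \<in> V \<and> (\<forall>a\<in>V. \<forall>b\<in>V. a \<circ> b \<in> W)"
proof -
  let ?T = "colimit_topology X"
  let ?m = "\<lambda>(f::'a \<Rightarrow> 'a, g::'a \<Rightarrow> 'a). f \<circ> g"
  let ?S = "{z \<in> topspace (prod_topology ?T ?T). ?m z \<in> W}"
  have cont: "continuous_map (prod_topology ?T ?T) ?T ?m"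
    using acp unfolding Homeo_ACP_def homeo_topological_group_def by (rule conjunct1)
  have "\<forall>U. openin ?T U \<longrightarrow> openin (prod_topology ?T ?T) {z \<in> topspace (prod_topology ?T ?T). ?m z \<in> U}"
    using cont unfolding continuous_map_def by (rule conjunct2)
  then have O: "openin (prod_topology ?T ?T) ?S" using W by blast
  have idT: "id \<in> topspace ?T" using openin_subset[OF W] idW by (rule subsetD)
  have mem: "(id, id) \<in> ?S" using idT idW by simp
  have "\<exists>U V. openin ?T U \<and> openin ?T V \<and> id \<in> U \<and> id \<in> V \<and> U \<times> V \<subseteq> ?S"
    using O[unfolded openin_prod_topology_alt] mem by blast
  then obtain V1 V2 where V: "openin ?T V1" "openin ?T V2" "id \<in> V1" "id \<in> V2" "V1 \<times> V2 \<subseteq> ?S"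
    by blast
  have "openin ?T (V1 \<inter> V2)" using V(1,2) by (rule openin_Int)
  moreover have "id \<in> V1 \<inter> V2" using V(3,4) by blast
  moreover have "\<forall>a\<in>V1 \<inter> V2. \<forall>b\<in>V1 \<inter> V2. a \<circ> b \<in> W"
  proof (intro ballI)
    fix a b assume "a \<in> V1 \<inter> V2" "b \<in> V1 \<inter> V2"
    then have "(a, b) \<in> V1 \<times> V2" by blast
    then have "(a, b) \<in> ?S" using V(5) by blast
    then show "a \<circ> b \<in> W" by simp
  qed
  ultimately show ?thesis by blast
qed

context Metric_space
begin

lemma moves:
  assumes disj: "C0 \<inter> Cm = {}" and Cm: "Cm \<subseteq> M" and C0: "C0 \<subseteq> M"
    and g: "g \<in> Homeo_on mtopology C0" and f: "f \<in> Homeo_on mtopology Cm" and fid: "f \<noteq> id"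
  shows "\<exists>x\<in>Cm. (g \<circ> f) x \<noteq> x"
proof -
  obtain x where x: "f x \<noteq> x" using fid by (metis eq_id_iff)
  have xC: "x \<in> Cm" using homeo_on_props(5)[OF f Cm] x by blast
  have "f x \<in> Cm" using homeo_on_props(4)[OF f Cm] xC by blast
  then have "f x \<notin> C0" using disj by blast
  then have "g (f x) = f x" using homeo_on_props(5)[OF g C0] by blast
  then have "(g \<circ> f) x \<noteq> x" using x by simp
  then show ?thesis using xC by blast
qed

lemma comp_dist:
  assumes disj: "C0 \<inter> Cm = {}" and Cm: "compactin mtopology Cm" and C0: "compactin mtopology C0"
    and g: "g \<in> Homeo_on mtopology C0" and f: "f \<in> Homeo_on mtopology Cm"
  shows "dsup M d (g \<circ> f) g \<le> dsup M d f id"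
proof (rule dsup_le[OF dsup_nonneg])
  have CmM: "Cm \<subseteq> M" and C0M: "C0 \<subseteq> M" using Cm C0 compactin_subset_topspace by fastforce+
  have L: "compactin mtopology (C0 \<union> Cm)" using Cm C0 compactin_Un by blast
  have f': "f \<in> Homeo_on mtopology (C0 \<union> Cm)" using f Homeo_on_mono[of Cm "C0 \<union> Cm"] by blast
  have i': "id \<in> Homeo_on mtopology (C0 \<union> Cm)" by (rule Homeo_on_id)
  fix x assume xM: "x \<in> M"
  show "d ((g \<circ> f) x) (g x) \<le> dsup M d f id"
  proof (cases "x \<in> Cm")
    case True
    have "f x \<in> Cm" using homeo_on_props(4)[OF f CmM] True by blast
    then have "f x \<notin> C0" using disj by blast
    then have "g (f x) = f x" using homeo_on_props(5)[OF g C0M] by blast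
    moreover have "g x = x" using True disj homeo_on_props(5)[OF g C0M] by blast
    ultimately have "d ((g \<circ> f) x) (g x) = d (f x) (id x)" by simp
    also have "\<dots> \<le> dsup M d f id" by (rule dsup_upper[OF bddf_homeo[OF f' i' L] xM])
    finally show ?thesis .
  next
    case False
    then have "f x = x" using homeo_on_props(5)[OF f CmM] by blast
    moreover have "g x \<in> M" using homeo_on_props(1)[OF g C0M xM] .
    ultimately show ?thesis using dsup_nonneg[of f id] by simp
  qed
qed

end



context Metric_space
begin

lemma closed_E:
  assumes L: "compactin mtopology L" and C0: "compactin mtopology C0" and Cm: "compactin mtopology Cm"
    and disj: "C0 \<inter> Cm = {}"
    and D: "\<And>j. D j \<in> Homeo_on mtopology C0"
    and Dfin: "\<forall>h\<in>Homeo_on mtopology C0. \<exists>\<epsilon>>0. finite {j. dsup M d (D j) h < \<epsilon>}"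
    and F: "\<And>j. F j \<in> Homeo_on mtopology Cm" "\<And>j. dsup M d (F j) id < 1/(real j + 1)"
  shows "closedin (compact_open mtopology (Homeo_on mtopology L)) (range (\<lambda>j. D j \<circ> F j) \<inter> Homeo_on mtopology L)"
proof -
  define GL where "GL = Homeo_on mtopology L"
  define E where "E = range (\<lambda>j. D j \<circ> F j) \<inter> GL"
  interpret GL: Metric_space GL "dsup M d" unfolding GL_def by (rule Metric_space_Homeo[OF L])
  define L' where "L' = L \<union> C0 \<union> Cm"
  have L': "compactin mtopology L'" unfolding L'_def using L C0 Cm compactin_Un by blast
  define G' where "G' = Homeo_on mtopology L'"
  interpret G': Metric_space G' "dsup M d" unfolding G'_def by (rule Metric_space_Homeo[OF L'])
  have C0M: "C0 \<subseteq> M" using C0 compactin_subset_topspace by fastforce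
  have GLG': "GL \<subseteq> G'" unfolding GL_def G'_def L'_def by (rule Homeo_on_mono) blast
  have DG': "D j \<in> G'" for j using D Homeo_on_mono[of C0 L'] unfolding G'_def L'_def by blast
  have FG': "F j \<in> G'" for j using F Homeo_on_mono[of Cm L'] unfolding G'_def L'_def by blast
  have DFG': "D j \<circ> F j \<in> G'" for j using DG' FG' Homeo_on_comp G'_def by blast
  have "closedin GL.mtopology E"
    unfolding GL.closedin_metric
  proof (intro conjI allI impI)
    show "E \<subseteq> GL" unfolding E_def by blast
    fix g assume gE: "g \<in> GL - E"
    then have gGL: "g \<in> GL" and gE': "g \<notin> E" by auto
    have gG': "g \<in> G'" using gGL GLG' by blast
    show "\<exists>r>0. disjnt E (GL.mball g r)"
    proof (rule ccontr)
      assume "\<not> (\<exists>r>0. disjnt E (GL.mball g r))"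
      then have close: "\<exists>j. dsup M d g (D j \<circ> F j) < r" if "r > 0" for r
        using that unfolding disjnt_def E_def by auto
      have ne: "g \<noteq> D j \<circ> F j" for j
      proof
        assume "g = D j \<circ> F j"
        then have "D j \<circ> F j \<in> E" using gGL unfolding E_def by auto
        then show False using gE' \<open>g = D j \<circ> F j\<close> by simp
      qed
      have stepA: "\<exists>j\<ge>N. dsup M d g (D j \<circ> F j) < r" if r: "r > 0" for r N
      proof -
        define S where "S = insert r ((\<lambda>j. dsup M d g (D j \<circ> F j)) ` {..<N})"
        have Sfin: "finite S" "S \<noteq> {}" unfolding S_def by auto
        have Spos: "\<forall>x\<in>S. x > 0"
          unfolding S_def using r G'.mdist_pos_less[OF ne gG' DFG'] by auto
        have m: "Min S > 0" using Sfin Spos by simp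
        obtain j where j: "dsup M d g (D j \<circ> F j) < Min S" using close[OF m] by blast
        have "Min S \<le> r" using Sfin unfolding S_def by simp
        moreover have "j \<ge> N"
        proof (rule ccontr)
          assume "\<not> j \<ge> N"
          then have "dsup M d g (D j \<circ> F j) \<in> S" unfolding S_def by simp
          then have "Min S \<le> dsup M d g (D j \<circ> F j)" using Sfin by simp
          then show False using j by simp
        qed
        ultimately show ?thesis using j by force
      qed
      have stepB: "\<exists>j\<ge>N. dsup M d g (D j) < r" if r: "r > 0" for r N
      proof -
        define N' where "N' = max N (nat \<lceil>2/r\<rceil>)"
        obtain j where j: "j \<ge> N'" "dsup M d g (D j \<circ> F j) < r/2" using stepA[of "r/2" N'] r by auto
        have "real j \<ge> 2/r" using j(1) unfolding N'_def by linarith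
        then have "real j + 1 > 2/r" by simp
        then have "1/(real j + 1) < r/2" using r by (simp add: field_simps)
        moreover have "dsup M d (D j \<circ> F j) (D j) \<le> dsup M d (F j) id"
          by (rule comp_dist[OF disj Cm C0 D F(1)])
        ultimately have "dsup M d (D j \<circ> F j) (D j) < r/2" using F(2)[of j] by linarith
        then have "dsup M d g (D j) < r"
          using G'.triangle[OF gG' DFG'[of j] DG'[of j]] j(2) by linarith
        then show ?thesis using j(1) unfolding N'_def by auto
      qed
      have gC0: "g \<in> Homeo_on mtopology C0"
        unfolding Homeo_on_def
      proof (intro CollectI conjI ballI allI impI)
        show "homeomorphic_map mtopology mtopology g" "\<And>x. x \<notin> topspace mtopology \<Longrightarrow> g x = x"
          using gGL unfolding GL_def Homeo_on_def by auto
        fix x assume x: "x \<in> topspace mtopology - C0"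
        then have xM: "x \<in> M" by simp
        have gx: "g x \<in> M" using homeo_on_props(1)[OF gGL[unfolded GL_def] _ xM] L compactin_subset_topspace by fastforce
        have "d (g x) x < r" if r: "r > 0" for r
        proof -
          obtain j where j: "dsup M d g (D j) < r" using stepB[OF r] by blast
          have "D j x = x" using homeo_on_props(5)[OF D C0M] x by blast
          moreover have "d (g x) (D j x) \<le> dsup M d g (D j)"
            using dsup_upper[OF bddf_homeo[OF gG'[unfolded G'_def] DG'[unfolded G'_def] L'] xM] .
          ultimately show ?thesis using j by simp
        qed
        then have "d (g x) x \<le> 0"
          by (metis less_irrefl not_le)
        then show "g x = x" using gx xM by (meson nonneg order_antisym zero)
      qed
      obtain \<epsilon> where \<epsilon>: "\<epsilon> > 0" "finite {j. dsup M d (D j) g < \<epsilon>}" using Dfin gC0 by blast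
      have "infinite {j. dsup M d (D j) g < \<epsilon>}"
        unfolding infinite_nat_iff_unbounded_le
      proof
        fix N
        obtain j where "j \<ge> N" "dsup M d g (D j) < \<epsilon>" using stepB[OF \<epsilon>(1)] by blast
        then show "\<exists>j\<ge>N. j \<in> {j. dsup M d (D j) g < \<epsilon>}" using G'.commute by auto
      qed
      then show False using \<epsilon>(2) by simp
    qed
  qed
  then show ?thesis using co_eq[OF L] unfolding E_def GL_def by simp
qed

end



context Metric_space
begin

lemma main_metric:
  assumes lc: "locally_compact_space mtopology" and nc: "\<not> compact_space mtopology"
    and hyp: "\<And>U. openin mtopology U \<Longrightarrow> U \<noteq> {} \<Longrightarrow> compactin mtopology (mtopology closure_of U) \<Longrightarrow>
           \<not> locally_compact_space (compact_open mtopology (Homeo_on mtopology (mtopology closure_of U)))"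
    and acp: "Homeo_ACP mtopology"
  shows False
proof -
  from open_seq[OF lc nc] obtain U :: "nat \<Rightarrow> 'a set" where
    UU: "(\<forall>k. openin mtopology (U k) \<and> U k \<noteq> {} \<and> compactin mtopology (mtopology closure_of U k))
     \<and> (\<forall>k. k \<noteq> 0 \<longrightarrow> (mtopology closure_of U 0) \<inter> (mtopology closure_of U k) = {})
     \<and> (\<forall>L. compactin mtopology L \<longrightarrow> finite {k. (mtopology closure_of U k) \<inter> L \<noteq> {}})"
    by (elim exE) 
  have U1: "\<And>k. openin mtopology (U k) \<and> U k \<noteq> {} \<and> compactin mtopology (mtopology closure_of U k)"
    using UU by simp
  have U2: "\<And>k. k \<noteq> 0 \<Longrightarrow> (mtopology closure_of U 0) \<inter> (mtopology closure_of U k) = {}"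
    using UU by simp
  have U3: "\<And>L. compactin mtopology L \<Longrightarrow> finite {k. (mtopology closure_of U k) \<inter> L \<noteq> {}}"
    using UU by simp
  define C where "C k = mtopology closure_of U k" for k
  have Ccpt: "compactin mtopology (C k)" for k using U1 C_def by simp
  have CM: "C k \<subseteq> M" for k using Ccpt[of k] compactin_subset_topspace by fastforce
  have nlc: "\<not> locally_compact_space (compact_open mtopology (Homeo_on mtopology (C k)))" for k
    using hyp U1[of k] C_def by simp
  have disj: "C 0 \<inter> C (Suc n) = {}" for n using U2[of "Suc n"] C_def by simp
  have "\<forall>n. \<exists>s::nat \<Rightarrow> 'a \<Rightarrow> 'a. (\<forall>j. s j \<in> Homeo_on mtopology (C 0) \<and> s j \<noteq> id \<and> dsup M d (s j) id < 1/(real n + 1))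
          \<and> (\<forall>h\<in>Homeo_on mtopology (C 0). \<exists>\<epsilon>>0. finite {j. dsup M d (s j) h < \<epsilon>})"
  proof
    fix n
    have "(1::real)/(real n + 1) > 0" by simp
    from nonlc_seq[OF Ccpt[of 0] nlc[of 0] this] obtain s :: "nat \<Rightarrow> 'a \<Rightarrow> 'a" where
      s: "inj s" "\<forall>j. s j \<in> Homeo_on mtopology (C 0) \<and> s j \<noteq> id \<and> dsup M d (s j) id < 1/(real n + 1)"
         "\<forall>h\<in>Homeo_on mtopology (C 0). \<exists>\<epsilon>>0. finite {j. dsup M d (s j) h < \<epsilon>}"
      by (elim exE conjE)
    have "(\<forall>j. s j \<in> Homeo_on mtopology (C 0) \<and> s j \<noteq> id \<and> dsup M d (s j) id < 1/(real n + 1))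
          \<and> (\<forall>h\<in>Homeo_on mtopology (C 0). \<exists>\<epsilon>>0. finite {j. dsup M d (s j) h < \<epsilon>})"
      using s(2) s(3) by (rule conjI)
    note sconj = this
    show "\<exists>s::nat \<Rightarrow> 'a \<Rightarrow> 'a. (\<forall>j. s j \<in> Homeo_on mtopology (C 0) \<and> s j \<noteq> id \<and> dsup M d (s j) id < 1/(real n + 1))
          \<and> (\<forall>h\<in>Homeo_on mtopology (C 0). \<exists>\<epsilon>>0. finite {j. dsup M d (s j) h < \<epsilon>})"
      by (rule exI[where x=s]) (rule sconj)
  qed
  then have "\<exists>D::nat \<Rightarrow> nat \<Rightarrow> 'a \<Rightarrow> 'a. \<forall>n. (\<forall>j. D n j \<in> Homeo_on mtopology (C 0) \<and> D n j \<noteq> id \<and> dsup M d (D n j) id < 1/(real n + 1))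
          \<and> (\<forall>h\<in>Homeo_on mtopology (C 0). \<exists>\<epsilon>>0. finite {j. dsup M d (D n j) h < \<epsilon>})"
    by (rule choice)
  then obtain D :: "nat \<Rightarrow> nat \<Rightarrow> 'a \<Rightarrow> 'a" where DD: "\<forall>n. (\<forall>j. D n j \<in> Homeo_on mtopology (C 0) \<and> D n j \<noteq> id \<and> dsup M d (D n j) id < 1/(real n + 1))
          \<and> (\<forall>h\<in>Homeo_on mtopology (C 0). \<exists>\<epsilon>>0. finite {j. dsup M d (D n j) h < \<epsilon>})"
    by (elim exE)
  have D: "\<And>n j. D n j \<in> Homeo_on mtopology (C 0)" "\<And>n j. dsup M d (D n j) id < 1/(real n + 1)"
    using DD by simp_all
  have Dfin: "\<And>n. \<forall>h\<in>Homeo_on mtopology (C 0). \<exists>\<epsilon>>0. finite {j. dsup M d (D n j) h < \<epsilon>}"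
    using DD by simp
  have "\<forall>n. \<exists>f. \<forall>j. f j \<in> Homeo_on mtopology (C (Suc n)) \<and> f j \<noteq> id \<and> dsup M d (f j) id < 1/(real j + 1)"
  proof
    fix n
    have "\<forall>j. \<exists>f. f \<in> Homeo_on mtopology (C (Suc n)) \<and> f \<noteq> id \<and> dsup M d f id < 1/(real j + 1)"
    proof
      fix j
      have "(1::real)/(real j + 1) > 0" by simp
      from nonlc_seq[OF Ccpt[of "Suc n"] nlc[of "Suc n"] this] obtain s :: "nat \<Rightarrow> 'a \<Rightarrow> 'a" where
        "inj s" "\<forall>i. s i \<in> Homeo_on mtopology (C (Suc n)) \<and> s i \<noteq> id \<and> dsup M d (s i) id < 1/(real j + 1)"
        "\<forall>h\<in>Homeo_on mtopology (C (Suc n)). \<exists>\<epsilon>>0. finite {i. dsup M d (s i) h < \<epsilon>}"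
        by (elim exE conjE)
      then have "s 0 \<in> Homeo_on mtopology (C (Suc n)) \<and> s 0 \<noteq> id \<and> dsup M d (s 0) id < 1/(real j + 1)" by simp
      note s0 = this
      show "\<exists>f. f \<in> Homeo_on mtopology (C (Suc n)) \<and> f \<noteq> id \<and> dsup M d f id < 1/(real j + 1)"
        by (rule exI[where x="s 0"]) (rule s0)
    qed
    then show "\<exists>f. \<forall>j. f j \<in> Homeo_on mtopology (C (Suc n)) \<and> f j \<noteq> id \<and> dsup M d (f j) id < 1/(real j + 1)"
      by (rule choice)
  qed
  then have "\<exists>F. \<forall>n j. F n j \<in> Homeo_on mtopology (C (Suc n)) \<and> F n j \<noteq> id \<and> dsup M d (F n j) id < 1/(real j + 1)"
    by (rule choice)
  then obtain F where FF: "\<forall>n j. F n j \<in> Homeo_on mtopology (C (Suc n)) \<and> F n j \<noteq> id \<and> dsup M d (F n j) id < 1/(real j + 1)"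
    by (elim exE)
  have F: "\<And>n j. F n j \<in> Homeo_on mtopology (C (Suc n))" "\<And>n j. F n j \<noteq> id"
     "\<And>n j. dsup M d (F n j) id < 1/(real j + 1)"
    using FF by simp_all
  define E where "E n = range (\<lambda>j. D n j \<circ> F n j)" for n
  define W where "W = Homeo_c mtopology - (\<Union>n. E n)"
  have moves': "\<exists>x\<in>C (Suc n). (D n j \<circ> F n j) x \<noteq> x" for n j
    by (rule moves[OF disj CM CM D(1) F(1) F(2)])
  have Hc: "Homeo_on mtopology K \<subseteq> Homeo_c mtopology" if "compactin mtopology K" for K
    unfolding Homeo_c_def using that by blast
  have Wopen: "openin (colimit_topology mtopology) W"
    unfolding colimit_open
  proof (intro conjI allI impI)
    show "W \<subseteq> Homeo_c mtopology" unfolding W_def by blast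
    fix K assume K: "compactin mtopology K"
    define N where "N = {n. C (Suc n) \<inter> K \<noteq> {}}"
    have "finite {k. C k \<inter> K \<noteq> {}}" using U3[OF K] C_def by simp
    then have Nfin: "finite N" unfolding N_def using finite_vimageI[of "{k. C k \<inter> K \<noteq> {}}" Suc] by (simp add: vimage_def)
    have eq: "W \<inter> Homeo_on mtopology K = Homeo_on mtopology K - (\<Union>n\<in>N. E n \<inter> Homeo_on mtopology K)"
    proof
      show "W \<inter> Homeo_on mtopology K \<subseteq> Homeo_on mtopology K - (\<Union>n\<in>N. E n \<inter> Homeo_on mtopology K)"
        unfolding W_def by blast
      show "Homeo_on mtopology K - (\<Union>n\<in>N. E n \<inter> Homeo_on mtopology K) \<subseteq> W \<inter> Homeo_on mtopology K"
      proof
        fix w assume w: "w \<in> Homeo_on mtopology K - (\<Union>n\<in>N. E n \<inter> Homeo_on mtopology K)"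
        then have wK: "w \<in> Homeo_on mtopology K" by blast
        have "w \<notin> E n" for n
        proof
          assume wE: "w \<in> E n"
          show False
          proof (cases "n \<in> N")
            case True then show False using w wE by blast
          next
            case False
            obtain j where wj: "w = D n j \<circ> F n j" using wE E_def by blast
            obtain x where x: "x \<in> C (Suc n)" "w x \<noteq> x" using moves'[of n j] wj by blast
            have "x \<in> M" using x CM by blast
            then have "x \<in> K" using wK x(2) unfolding Homeo_on_def by auto
            then have "n \<in> N" using x(1) N_def by blast
            then show False using False by simp
          qed
        qed
        then show "w \<in> W \<inter> Homeo_on mtopology K" using wK Hc[OF K] unfolding W_def by blast
      qed
    qed
    have "closedin (compact_open mtopology (Homeo_on mtopology K)) (\<Union>n\<in>N. E n \<inter> Homeo_on mtopology K)"
    proof (rule closedin_Union)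
      show "finite ((\<lambda>n. E n \<inter> Homeo_on mtopology K) ` N)" using Nfin by simp
      fix T assume "T \<in> (\<lambda>n. E n \<inter> Homeo_on mtopology K) ` N"
      then obtain n where T: "T = E n \<inter> Homeo_on mtopology K" by blast
      show "closedin (compact_open mtopology (Homeo_on mtopology K)) T"
        unfolding T E_def
        by (rule closed_E[OF K Ccpt Ccpt disj D(1) Dfin F(1) F(3)])
    qed
    then have "openin (compact_open mtopology (Homeo_on mtopology K))
        (topspace (compact_open mtopology (Homeo_on mtopology K)) - (\<Union>n\<in>N. E n \<inter> Homeo_on mtopology K))"
      by (rule openin_diff[OF openin_topspace])
    then show "openin (compact_open mtopology (Homeo_on mtopology K)) (W \<inter> Homeo_on mtopology K)"
      unfolding eq topspace_co .
  qed
  have idW: "id \<in> W"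
  proof -
    have "id \<in> Homeo_c mtopology" using Hc[of "{}"] Homeo_on_id by blast
    moreover have "id \<notin> E n" for n
    proof
      assume "id \<in> E n"
      then obtain j where "id = D n j \<circ> F n j" using E_def by blast
      then show False using moves'[of n j] by (metis id_apply)
    qed
    ultimately show ?thesis unfolding W_def by blast
  qed
  obtain V where V: "openin (colimit_topology mtopology) V" "id \<in> V" "\<And>a b. a \<in> V \<Longrightarrow> b \<in> V \<Longrightarrow> a \<circ> b \<in> W"
    using acp_mult[OF acp Wopen idW] by blast
  have Vo: "openin (compact_open mtopology (Homeo_on mtopology (C k))) (V \<inter> Homeo_on mtopology (C k))" for k
    using V(1) Ccpt unfolding colimit_open by blast
  have ball: "\<exists>r>0. \<forall>f\<in>Homeo_on mtopology (C k). dsup M d f id < r \<longrightarrow> f \<in> V" for k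
  proof -
    define H where "H = Homeo_on mtopology (C k)"
    interpret H: Metric_space H "dsup M d" unfolding H_def by (rule Metric_space_Homeo[OF Ccpt])
    have "openin H.mtopology (V \<inter> H)" using Vo[of k] co_eq[OF Ccpt[of k]] H_def by simp
    moreover have "id \<in> V \<inter> H" using V(2) Homeo_on_id H_def by blast
    ultimately obtain r where r: "r > 0" "H.mball id r \<subseteq> V \<inter> H" unfolding H.openin_mtopology by blast
    have "f \<in> V" if "f \<in> H" "dsup M d f id < r" for f
    proof -
      have "id \<in> H" unfolding H_def by (rule Homeo_on_id)
      then have "f \<in> H.mball id r" using that H.commute[of f id] by simp
      then show ?thesis using r by blast
    qed
    then show ?thesis using r H_def by blast
  qed
  obtain r where r: "r > 0" "\<And>f. f \<in> Homeo_on mtopology (C 0) \<Longrightarrow> dsup M d f id < r \<Longrightarrow> f \<in> V"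
    using ball[of 0] by blast
  obtain n where n: "inverse (real (Suc n)) < r" using reals_Archimedean[OF r(1)] by blast
  obtain \<delta> where \<delta>: "\<delta> > 0" "\<And>f. f \<in> Homeo_on mtopology (C (Suc n)) \<Longrightarrow> dsup M d f id < \<delta> \<Longrightarrow> f \<in> V"
    using ball[of "Suc n"] by blast
  obtain j where j: "inverse (real (Suc j)) < \<delta>" using reals_Archimedean[OF \<delta>(1)] by blast
  have "dsup M d (D n j) id < r" using D(2)[of n j] n by (simp add: inverse_eq_divide add.commute)
  then have DV: "D n j \<in> V" using r(2) D(1) by blast
  have "dsup M d (F n j) id < \<delta>" using F(3)[of n j] j by (simp add: inverse_eq_divide add.commute)
  then have FV: "F n j \<in> V" using \<delta>(2) F(1) by blast
  have "D n j \<circ> F n j \<in> W" using V(3)[OF DV FV] .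
  moreover have "D n j \<circ> F n j \<in> E n" unfolding E_def by blast
  ultimately show False unfolding W_def by blast
qed

end

theorem theoremC:
  fixes X :: "'a topology"
  assumes "locally_compact_space X"
    and "metrizable_space X"
    and "\<not> compact_space X"
    and "\<And>U. openin X U \<Longrightarrow> U \<noteq> {} \<Longrightarrow> compactin X (X closure_of U) \<Longrightarrow>
           \<not> locally_compact_space (compact_open X (Homeo_on X (X closure_of U)))"
  shows "\<not> Homeo_ACP X"
proof
  assume acp: "Homeo_ACP X"
  obtain M d where ms: "Metric_space M d" and X: "X = Metric_space.mtopology M d"
    using assms(2) unfolding metrizable_space_def by blast
  show False
    using Metric_space.main_metric[OF ms, folded X, OF assms(1) assms(3) assms(4) acp] .
qed


end
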